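(* Let $W_2\in\{M_2,S_2\}$ and let $\phi:W_2\to W_2$ be a linear map with $\sigma_{\mathcal{K}}(\phi(A))=\sigma_{\mathcal{K}}(A)$ for all $A\in W_2$. Then $\phi(E_{12}+E_{21})=E_{12}+E_{21}$ or $\phi(E_{12}+E_{21})=-(E_{12}+E_{21})$.
   Context: $M_2$: real $2\times2$ matrices; $S_2$: symmetric ones; $E_{ij}$ is the matrix with $1$ in position $(i,j)$ and $0$ elsewhere. Lorentz cone $\mathcal{K}=\{(x_1,x_2)^T:|x_1|\le x_2\}$; a real $\lambda$ is an L-eigenvalue of $A$ if there is a nonzero $x\in\mathcal{K}$ with $(A-\lambda I)x\in\mathcal{K}$ and $x^T(A-\lambda I)x=0$; $\sigma_{\mathcal{K}}(A)$ is the set of L-eigenvalues. *)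

theory Defs
  imports "HOL-Analysis.Analysis"
begin

type_synonym mat2 = "real ^ 2 ^ 2"

definition Emat :: "2 \<Rightarrow> 2 \<Rightarrow> mat2" where
  "Emat i j = (\<chi> k l. if k = i \<and> l = j then 1 else 0)"

definition lorentz_cone :: "(real ^ 2) set" where
  "lorentz_cone = {x. \<bar>x $ 1\<bar> \<le> x $ 2}"

definition is_L_eigenvalue :: "mat2 \<Rightarrow> real \<Rightarrow> bool" where
  "is_L_eigenvalue A lam \<longleftrightarrow>
     (\<exists>x. x \<noteq> 0 \<and> x \<in> lorentz_cone \<and>
          (A - lam *\<^sub>R mat 1) *v x \<in> lorentz_cone \<and>
          x \<bullet> ((A - lam *\<^sub>R mat 1) *v x) = 0)"

definition L_spectrum :: "mat2 \<Rightarrow> real set" where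
  "L_spectrum A = {lam. is_L_eigenvalue A lam}"

definition sym_mats :: "mat2 set" where
  "sym_mats = {A. transpose A = A}"

end

theory Submission
  imports Defs
begin


lemma coordL:
  fixes A :: mat2
  defines "a \<equiv> A$1$1" and "b \<equiv> A$1$2" and "c \<equiv> A$2$1" and "d \<equiv> A$2$2"
  shows "is_L_eigenvalue A lam \<longleftrightarrow>
    (\<exists>x1 x2. (x1 \<noteq> 0 \<or> x2 \<noteq> 0) \<and> \<bar>x1\<bar> \<le> x2 \<and>
       \<bar>(a - lam) * x1 + b * x2\<bar> \<le> c * x1 + (d - lam) * x2 \<and>
       x1 * ((a - lam) * x1 + b * x2) + x2 * (c * x1 + (d - lam) * x2) = 0)"
proof
  assume "is_L_eigenvalue A lam"
  then obtain x where x: "x \<noteq> 0" "x \<in> lorentz_cone" "(A - lam *\<^sub>R mat 1) *v x \<in> lorentz_cone"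
    "x \<bullet> ((A - lam *\<^sub>R mat 1) *v x) = 0" unfolding is_L_eigenvalue_def by blast
  have "x$1 \<noteq> 0 \<or> x$2 \<noteq> 0" using x(1) by (metis vec_eq_iff exhaust_2 zero_index)
  then show "\<exists>x1 x2. (x1 \<noteq> 0 \<or> x2 \<noteq> 0) \<and> \<bar>x1\<bar> \<le> x2 \<and>
       \<bar>(a - lam) * x1 + b * x2\<bar> \<le> c * x1 + (d - lam) * x2 \<and>
       x1 * ((a - lam) * x1 + b * x2) + x2 * (c * x1 + (d - lam) * x2) = 0"
    using x(2-4) by (intro exI[of _ "x$1"] exI[of _ "x$2"])
      (auto simp: lorentz_cone_def matrix_vector_mult_def sum_2 inner_vec_def mat_def a_def b_def c_def d_def algebra_simps)
next
  assume "\<exists>x1 x2. (x1 \<noteq> 0 \<or> x2 \<noteq> 0) \<and> \<bar>x1\<bar> \<le> x2 \<and>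
       \<bar>(a - lam) * x1 + b * x2\<bar> \<le> c * x1 + (d - lam) * x2 \<and>
       x1 * ((a - lam) * x1 + b * x2) + x2 * (c * x1 + (d - lam) * x2) = 0"
  then obtain x1 x2 where h: "(x1 \<noteq> 0 \<or> x2 \<noteq> 0)" "\<bar>x1\<bar> \<le> x2"
       "\<bar>(a - lam) * x1 + b * x2\<bar> \<le> c * x1 + (d - lam) * x2"
       "x1 * ((a - lam) * x1 + b * x2) + x2 * (c * x1 + (d - lam) * x2) = 0" by blast
  define x :: "real^2" where "x = (\<chi> i. if i = 1 then x1 else x2)"
  have x1: "x$1 = x1" and x2: "x$2 = x2" by (auto simp: x_def)
  have "x \<noteq> 0" using h(1) x1 x2 by auto
  then show "is_L_eigenvalue A lam" unfolding is_L_eigenvalue_def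
    using h(2-4) by (intro exI[of _ x])
      (auto simp: x1 x2 lorentz_cone_def matrix_vector_mult_def sum_2 inner_vec_def mat_def a_def b_def c_def d_def algebra_simps)
qed


definition Pp :: "real \<Rightarrow> real \<Rightarrow> real \<Rightarrow> real \<Rightarrow> real \<Rightarrow> bool" where
  "Pp p q r s lam \<longleftrightarrow> (lam = p \<and> r \<ge> 0) \<or> (lam = s \<and> q \<ge> 0) \<or>
     (\<exists>u v. u > 0 \<and> v > 0 \<and> (p - lam) * u + q * v = 0 \<and> r * u + (s - lam) * v = 0)"

lemma charR:
  fixes a b c d lam :: real
  shows "(\<exists>x1 x2. (x1 \<noteq> 0 \<or> x2 \<noteq> 0) \<and> \<bar>x1\<bar> \<le> x2 \<and>
       \<bar>(a - lam) * x1 + b * x2\<bar> \<le> c * x1 + (d - lam) * x2 \<and>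
       x1 * ((a - lam) * x1 + b * x2) + x2 * (c * x1 + (d - lam) * x2) = 0)
    \<longleftrightarrow> Pp ((a+b+c+d)/2) ((b-a+d-c)/2) ((c+d-a-b)/2) ((a-b-c+d)/2) lam"
  (is "?L \<longleftrightarrow> Pp ?p ?q ?r ?s lam")
proof
  assume ?L
  then obtain x1 x2 where h: "(x1 \<noteq> 0 \<or> x2 \<noteq> 0)" "\<bar>x1\<bar> \<le> x2"
       "\<bar>(a - lam) * x1 + b * x2\<bar> \<le> c * x1 + (d - lam) * x2"
       "x1 * ((a - lam) * x1 + b * x2) + x2 * (c * x1 + (d - lam) * x2) = 0" by blast
  define u where "u = x2 + x1"
  define v where "v = x2 - x1"
  define y1 where "y1 = (a - lam) * x1 + b * x2"
  define y2 where "y2 = c * x1 + (d - lam) * x2"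
  have u0: "u \<ge> 0" and v0: "v \<ge> 0" using h(2) by (auto simp: u_def v_def)
  have uv: "u > 0 \<or> v > 0" using h(1) u0 v0 unfolding u_def v_def by auto
  have al: "y1 + y2 = (?p - lam) * u + ?q * v" by (simp add: u_def v_def y1_def y2_def field_simps)
  have be: "y2 - y1 = ?r * u + (?s - lam) * v" by (simp add: u_def v_def y1_def y2_def field_simps)
  have a0: "y1 + y2 \<ge> 0" and b0: "y2 - y1 \<ge> 0" using h(3) by (auto simp: y1_def y2_def)
  have "u * (y1 + y2) + v * (y2 - y1) = 0" using h(4)
    by (simp add: u_def v_def y1_def y2_def algebra_simps)
  moreover have "u * (y1 + y2) \<ge> 0" "v * (y2 - y1) \<ge> 0" using u0 v0 a0 b0 by auto
  ultimately have e1: "u * (y1 + y2) = 0" and e2: "v * (y2 - y1) = 0" by linarith+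
  show "Pp ?p ?q ?r ?s lam"
  proof (cases "u > 0")
    case True
    then have A: "y1 + y2 = 0" using e1 by simp
    show ?thesis
    proof (cases "v > 0")
      case True
      then have "y2 - y1 = 0" using e2 by simp
      then show ?thesis using A al be \<open>u > 0\<close> True unfolding Pp_def by metis
    next
      case False
      then have "v = 0" using v0 by simp
      then have "(?p - lam) * u = 0" "?r * u \<ge> 0" using A al be b0 by auto
      then show ?thesis using \<open>u > 0\<close> unfolding Pp_def by (simp add: zero_le_mult_iff)
    qed
  next
    case False
    then have "u = 0" "v > 0" using u0 uv by auto
    then have "y2 - y1 = 0" using e2 by simp
    then have "(?s - lam) * v = 0" "?q * v \<ge> 0" using \<open>u = 0\<close> al be a0 by auto
    then show ?thesis using \<open>v > 0\<close> unfolding Pp_def by (simp add: zero_le_mult_iff)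
  qed
next
  assume P: "Pp ?p ?q ?r ?s lam"
  have wit: "?L" if "u \<ge> 0" "v \<ge> 0" "u > 0 \<or> v > 0"
      "(?p - lam) * u + ?q * v \<ge> 0" "?r * u + (?s - lam) * v \<ge> 0"
      "u * ((?p - lam) * u + ?q * v) + v * (?r * u + (?s - lam) * v) = 0" for u v
  proof (intro exI conjI)
    let ?x1 = "(u - v) / 2" and ?x2 = "(u + v) / 2"
    show "?x1 \<noteq> 0 \<or> ?x2 \<noteq> 0" using that by auto
    show "\<bar>?x1\<bar> \<le> ?x2" using that by auto
    have s1: "((a - lam) * ?x1 + b * ?x2) + (c * ?x1 + (d - lam) * ?x2) = (?p - lam) * u + ?q * v"
      by (simp add: field_simps)
    have s2: "(c * ?x1 + (d - lam) * ?x2) - ((a - lam) * ?x1 + b * ?x2) = ?r * u + (?s - lam) * v"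
      by (simp add: field_simps)
    show "\<bar>(a - lam) * ?x1 + b * ?x2\<bar> \<le> c * ?x1 + (d - lam) * ?x2"
      using s1 s2 that(4,5) by (intro abs_leI) linarith+
    have eq: "?x1 * ((a - lam) * ?x1 + b * ?x2) + ?x2 * (c * ?x1 + (d - lam) * ?x2)
       = (u * ((?p - lam) * u + ?q * v) + v * (?r * u + (?s - lam) * v)) / 2"
      by (simp add: field_simps)
    show "?x1 * ((a - lam) * ?x1 + b * ?x2) + ?x2 * (c * ?x1 + (d - lam) * ?x2) = 0"
      unfolding eq using that(6) by simp
  qed
  from P consider "lam = ?p" "?r \<ge> 0" | "lam = ?s" "?q \<ge> 0"
    | u v where "u > 0" "v > 0" "(?p - lam) * u + ?q * v = 0" "?r * u + (?s - lam) * v = 0"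
    unfolding Pp_def by blast
  then show ?L
  proof cases
    case 1
    then show ?thesis using wit[of 1 0] by simp
  next
    case 2
    then show ?thesis using wit[of 0 1] by simp
  next
    case 3
    then show ?thesis using wit[of u v] by simp
  qed
qed

definition pp :: "mat2 \<Rightarrow> real" where "pp A = (A$1$1 + A$1$2 + A$2$1 + A$2$2) / 2"
definition qq :: "mat2 \<Rightarrow> real" where "qq A = (A$1$2 - A$1$1 + A$2$2 - A$2$1) / 2"
definition rr :: "mat2 \<Rightarrow> real" where "rr A = (A$2$1 + A$2$2 - A$1$1 - A$1$2) / 2"
definition ss :: "mat2 \<Rightarrow> real" where "ss A = (A$1$1 - A$1$2 - A$2$1 + A$2$2) / 2"

lemma charL: "lam \<in> L_spectrum A \<longleftrightarrow> Pp (pp A) (qq A) (rr A) (ss A) lam"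
  unfolding L_spectrum_def mem_Collect_eq coordL charR pp_def qq_def rr_def ss_def ..


lemma finalR:
  fixes p q r s :: real
  assumes h1: "\<And>lam. Pp p q r s lam \<longleftrightarrow> (lam = 1 \<or> lam = -1)"
    and h2: "\<And>lam. Pp (-p) (-q) (-r) (-s) lam \<longleftrightarrow> (lam = 1 \<or> lam = -1)"
    and rob: "q = r \<or> ((r > 0 \<longrightarrow> p \<noteq> 1) \<and> (q > 0 \<longrightarrow> s \<noteq> 1) \<and> (r < 0 \<longrightarrow> p \<noteq> -1) \<and> (q < 0 \<longrightarrow> s \<noteq> -1))"
  shows "q = 0 \<and> r = 0 \<and> ((p = 1 \<and> s = -1) \<or> (p = -1 \<and> s = 1))"
proof -
  have pv: "p = 1 \<or> p = -1"
  proof (cases "r \<ge> 0")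
    case True
    then have "Pp p q r s p" unfolding Pp_def by simp
    then show ?thesis using h1 by blast
  next
    case False
    then have "Pp (-p) (-q) (-r) (-s) (-p)" unfolding Pp_def by simp
    then show ?thesis using h2 by force
  qed
  have sv: "s = 1 \<or> s = -1"
  proof (cases "q \<ge> 0")
    case True
    then have "Pp p q r s s" unfolding Pp_def by simp
    then show ?thesis using h1 by blast
  next
    case False
    then have "Pp (-p) (-q) (-r) (-s) (-s)" unfolding Pp_def by simp
    then show ?thesis using h2 by force
  qed
  have m1: "Pp p q r s 1" and m2: "Pp p q r s (-1)" and n1: "Pp (-p) (-q) (-r) (-s) 1"
    using h1 h2 by auto
  have E: "\<exists>u v. u > 0 \<and> v > 0 \<and> (a - lam) * u + b * v = 0 \<and> c * u + (d - lam) * v = 0"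
    if "Pp a b c d lam" "lam \<noteq> a" "lam \<noteq> d" for a b c d lam
    using that unfolding Pp_def by blast
  have sg1: "b < 0" if "u > 0" "v > 0" "k * u + b * v = 0" "k > 0" for u v k b :: real
  proof -
    have "b * v < 0" using that by (smt (verit) mult_pos_pos)
    then show ?thesis using that(2) by (simp add: mult_less_0_iff)
  qed
  have sg2: "b > 0" if "u > 0" "v > 0" "k * u + b * v = 0" "k < 0" for u v k b :: real
  proof -
    have "b * v > 0" using that by (smt (verit) mult_neg_pos)
    then show ?thesis using that(2) by (simp add: zero_less_mult_iff)
  qed
  have sg0: "b = 0" if "v > 0" "b * v = 0" for v b :: real using that by simp
  consider "p = 1" "s = 1" | "p = 1" "s = -1" | "p = -1" "s = 1" | "p = -1" "s = -1"
    using pv sv by blast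
  then show ?thesis
  proof cases
    case 1
    then obtain u v where uv: "u > 0" "v > 0" "(p - -1) * u + q * v = 0" "r * u + (s - -1) * v = 0"
      using E[OF m2] by auto
    have "q < 0" using sg1[of u v 2 q] uv 1 by simp
    moreover have "r < 0" using sg1[of v u 2 r] uv 1 by (simp add: algebra_simps)
    moreover have "r \<ge> 0 \<or> q \<ge> 0 \<or> q = 0"
    proof -
      from m1 1 have "r \<ge> 0 \<or> q \<ge> 0 \<or> (\<exists>u v. u > 0 \<and> v > 0 \<and> q * v = 0 \<and> r * u = 0)"
        unfolding Pp_def by simp
      then show ?thesis by auto
    qed
    ultimately show ?thesis by linarith
  next
    case 2
    have r0: "r \<ge> 0"
    proof -
      from m1 2 have "r \<ge> 0 \<or> (\<exists>u v. u > 0 \<and> v > 0 \<and> q * v = 0 \<and> r * u + (-2) * v = 0)"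
        unfolding Pp_def by simp
      then show ?thesis
      proof
        assume "\<exists>u v. u > 0 \<and> v > 0 \<and> q * v = 0 \<and> r * u + (-2) * v = 0"
        then obtain u v where "u > 0" "v > 0" "r * u + (-2) * v = 0" by blast
        then show ?thesis using sg2[of v u "-2" r] by (simp add: algebra_simps)
      qed
    qed
    have q0: "q \<le> 0"
    proof -
      from n1 2 have "-q \<ge> 0 \<or> (\<exists>u v. u > 0 \<and> v > 0 \<and> (-2) * u + (-q) * v = 0 \<and> (-r) * u = 0)"
        unfolding Pp_def by simp
      then show ?thesis
      proof
        assume "\<exists>u v. u > 0 \<and> v > 0 \<and> (-2) * u + (-q) * v = 0 \<and> (-r) * u = 0"
        then obtain u v where "u > 0" "v > 0" "(-2) * u + (-q) * v = 0" by blast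
        then show ?thesis using sg2[of u v "-2" "-q"] by simp
      qed simp
    qed
    show ?thesis using rob r0 q0 2 by force
  next
    case 3
    have q0: "q \<ge> 0"
    proof -
      from m1 3 have "q \<ge> 0 \<or> (\<exists>u v. u > 0 \<and> v > 0 \<and> (-2) * u + q * v = 0 \<and> r * u = 0)"
        unfolding Pp_def by simp
      then show ?thesis
      proof
        assume "\<exists>u v. u > 0 \<and> v > 0 \<and> (-2) * u + q * v = 0 \<and> r * u = 0"
        then obtain u v where "u > 0" "v > 0" "(-2) * u + q * v = 0" by blast
        then show ?thesis using sg2[of u v "-2" q] by simp
      qed
    qed
    have r0: "r \<le> 0"
    proof -
      from n1 3 have "-r \<ge> 0 \<or> (\<exists>u v. u > 0 \<and> v > 0 \<and> (-q) * v = 0 \<and> (-r) * u + (-2) * v = 0)"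
        unfolding Pp_def by simp
      then show ?thesis
      proof
        assume "\<exists>u v. u > 0 \<and> v > 0 \<and> (-q) * v = 0 \<and> (-r) * u + (-2) * v = 0"
        then obtain u v where "u > 0" "v > 0" "(-r) * u + (-2) * v = 0" by blast
        then show ?thesis using sg2[of v u "-2" "-r"] by (simp add: algebra_simps)
      qed simp
    qed
    show ?thesis using rob r0 q0 3 by force
  next
    case 4
    obtain u v where uv: "u > 0" "v > 0" "(p - 1) * u + q * v = 0" "r * u + (s - 1) * v = 0"
      using E[OF m1] 4 by auto
    have qp: "q > 0" using sg2[of u v "-2" q] uv 4 by simp
    have rp: "r > 0" using sg2[of v u "-2" r] uv 4 by (simp add: algebra_simps)
    from n1 4 have "-r \<ge> 0 \<or> -q \<ge> 0 \<or> (\<exists>u v. u > 0 \<and> v > 0 \<and> (-q) * v = 0 \<and> (-r) * u = 0)"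
      unfolding Pp_def by simp
    then show ?thesis using qp rp by auto
  qed
qed


lemma small_t:
  fixes a c b e :: real
  assumes "a > 0" "c > 0"
  shows "\<exists>t>0. t * \<bar>b\<bar> < a \<and> t * \<bar>e\<bar> < c"
proof -
  define t1 where "t1 = a / (\<bar>b\<bar> + 1)"
  define t2 where "t2 = c / (\<bar>e\<bar> + 1)"
  have t1p: "t1 > 0" and t2p: "t2 > 0" using assms by (auto simp: t1_def t2_def)
  have "t1 * \<bar>b\<bar> < a" using assms by (simp add: t1_def field_simps)
  moreover have "t2 * \<bar>e\<bar> < c" using assms by (simp add: t2_def field_simps)
  moreover have "min t1 t2 * \<bar>b\<bar> \<le> t1 * \<bar>b\<bar>" "min t1 t2 * \<bar>e\<bar> \<le> t2 * \<bar>e\<bar>"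
    by (auto intro: mult_right_mono)
  ultimately show ?thesis using t1p t2p by (intro exI[of _ "min t1 t2"]) auto
qed

lemma robust:
  fixes \<phi> :: "mat2 \<Rightarrow> mat2"
  assumes add: "\<And>A B. \<phi> (A + B) = \<phi> A + \<phi> B"
    and scale: "\<And>c A. \<phi> (c *\<^sub>R A) = c *\<^sub>R \<phi> A"
    and spec: "\<And>A. L_spectrum (\<phi> A) = L_spectrum A"
    and fr: "\<And>t. t > 0 \<Longrightarrow> L_spectrum (A0 + t *\<^sub>R Y) \<subseteq> {-1}"
  shows "\<not> (pp (\<phi> A0) = 1 \<and> rr (\<phi> A0) > 0) \<and> \<not> (ss (\<phi> A0) = 1 \<and> qq (\<phi> A0) > 0)"
proof -
  define X where "X = \<phi> A0"
  define Z where "Z = \<phi> Y"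
  have img: "L_spectrum (X + t *\<^sub>R Z) \<subseteq> {-1}" if "t > 0" for t
    using fr[OF that] spec[of "A0 + t *\<^sub>R Y"] add scale by (simp add: X_def Z_def)
  have lin: "pp (X + t *\<^sub>R Z) = pp X + t * pp Z" "qq (X + t *\<^sub>R Z) = qq X + t * qq Z"
    "rr (X + t *\<^sub>R Z) = rr X + t * rr Z" "ss (X + t *\<^sub>R Z) = ss X + t * ss Z" for t
    by (simp_all add: pp_def qq_def rr_def ss_def field_simps)
  have A: False if h: "pp X = 1" "rr X > 0"
  proof -
    obtain t where t: "t > 0" "t * \<bar>rr Z\<bar> < rr X" "t * \<bar>pp Z\<bar> < 1"
      using small_t[of "rr X" 1 "rr Z" "pp Z"] h by auto
    have f1: "t * rr Z \<ge> - (t * \<bar>rr Z\<bar>)"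
      using t(1) mult_left_mono[of "- \<bar>rr Z\<bar>" "rr Z" t] by simp
    have f2: "t * pp Z \<ge> - (t * \<bar>pp Z\<bar>)"
      using t(1) mult_left_mono[of "- \<bar>pp Z\<bar>" "pp Z" t] by simp
    have "rr (X + t *\<^sub>R Z) \<ge> 0" using lin(3)[of t] f1 t h by linarith
    moreover have "pp (X + t *\<^sub>R Z) \<noteq> -1" using lin(1)[of t] f2 t h by linarith
    ultimately have "rr (X + t *\<^sub>R Z) \<ge> 0" "pp (X + t *\<^sub>R Z) \<noteq> -1" by auto
    then have "pp (X + t *\<^sub>R Z) \<in> L_spectrum (X + t *\<^sub>R Z)"
      unfolding charL Pp_def by simp
    then show False using img[OF t(1)] \<open>pp (X + t *\<^sub>R Z) \<noteq> -1\<close> by auto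
  qed
  have B: False if h: "ss X = 1" "qq X > 0"
  proof -
    obtain t where t: "t > 0" "t * \<bar>qq Z\<bar> < qq X" "t * \<bar>ss Z\<bar> < 1"
      using small_t[of "qq X" 1 "qq Z" "ss Z"] h by auto
    have f1: "t * qq Z \<ge> - (t * \<bar>qq Z\<bar>)"
      using t(1) mult_left_mono[of "- \<bar>qq Z\<bar>" "qq Z" t] by simp
    have f2: "t * ss Z \<ge> - (t * \<bar>ss Z\<bar>)"
      using t(1) mult_left_mono[of "- \<bar>ss Z\<bar>" "ss Z" t] by simp
    have "qq (X + t *\<^sub>R Z) \<ge> 0" using lin(2)[of t] f1 t h by linarith
    moreover have "ss (X + t *\<^sub>R Z) \<noteq> -1" using lin(4)[of t] f2 t h by linarith
    ultimately have "qq (X + t *\<^sub>R Z) \<ge> 0" "ss (X + t *\<^sub>R Z) \<noteq> -1" by auto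
    then have "ss (X + t *\<^sub>R Z) \<in> L_spectrum (X + t *\<^sub>R Z)"
      unfolding charL Pp_def by simp
    then show False using img[OF t(1)] \<open>ss (X + t *\<^sub>R Z) \<noteq> -1\<close> by auto
  qed
  show ?thesis using A B unfolding X_def by blast
qed


lemma Pp_C0: "Pp 1 0 0 (-1) lam \<longleftrightarrow> (lam = 1 \<or> lam = -1)"
  unfolding Pp_def by auto

lemma Pp_mC0: "Pp (-1) 0 0 1 lam \<longleftrightarrow> (lam = 1 \<or> lam = -1)"
  unfolding Pp_def by auto

theorem lemma4p8:
  fixes W :: "mat2 set" and \<phi> :: "mat2 \<Rightarrow> mat2"
  assumes W: "W = UNIV \<or> W = sym_mats"
    and maps: "\<And>A. A \<in> W \<Longrightarrow> \<phi> A \<in> W"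
    and add: "\<And>A B. A \<in> W \<Longrightarrow> B \<in> W \<Longrightarrow> \<phi> (A + B) = \<phi> A + \<phi> B"
    and scale: "\<And>c A. A \<in> W \<Longrightarrow> \<phi> (c *\<^sub>R A) = c *\<^sub>R \<phi> A"
    and spec: "\<And>A. A \<in> W \<Longrightarrow> L_spectrum (\<phi> A) = L_spectrum A"
  shows "\<phi> (Emat 1 2 + Emat 2 1) = Emat 1 2 + Emat 2 1 \<or>
         \<phi> (Emat 1 2 + Emat 2 1) = - (Emat 1 2 + Emat 2 1)"
proof -
  define C0 where "C0 = Emat 1 2 + Emat 2 1"
  have C0e: "C0$1$1 = 0" "C0$1$2 = 1" "C0$2$1 = 1" "C0$2$2 = 0"
    by (simp_all add: C0_def Emat_def)
  have C0W: "C0 \<in> W"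
  proof -
    have "transpose C0 = C0"
      by (simp add: vec_eq_iff forall_2 transpose_def C0e)
    then show ?thesis using W by (auto simp: sym_mats_def)
  qed
  define M where "M = \<phi> C0"
  have negM: "\<phi> (- C0) = - M"
    using scale[OF C0W, of "-1"] by (simp add: M_def)
  have mC0W: "- C0 \<in> W"
  proof -
    have "transpose (- C0) = - C0"
      by (simp add: vec_eq_iff forall_2 transpose_def C0e)
    then show ?thesis using W by (auto simp: sym_mats_def)
  qed
  have h1: "Pp (pp M) (qq M) (rr M) (ss M) lam \<longleftrightarrow> (lam = 1 \<or> lam = -1)" for lam
  proof -
    have "Pp (pp M) (qq M) (rr M) (ss M) lam \<longleftrightarrow> lam \<in> L_spectrum C0"
      unfolding charL[symmetric] M_def using spec[OF C0W] by simp
    also have "\<dots> \<longleftrightarrow> Pp 1 0 0 (-1) lam"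
      by (simp add: charL pp_def qq_def rr_def ss_def C0e)
    finally show ?thesis using Pp_C0 by simp
  qed
  have h2: "Pp (- pp M) (- qq M) (- rr M) (- ss M) lam \<longleftrightarrow> (lam = 1 \<or> lam = -1)" for lam
  proof -
    have e: "pp (- M) = - pp M" "qq (- M) = - qq M" "rr (- M) = - rr M" "ss (- M) = - ss M"
      by (simp_all add: pp_def qq_def rr_def ss_def field_simps)
    have "Pp (- pp M) (- qq M) (- rr M) (- ss M) lam \<longleftrightarrow> lam \<in> L_spectrum (- C0)"
      unfolding e[symmetric] charL[symmetric] negM[symmetric] using spec[OF mC0W] by simp
    also have "\<dots> \<longleftrightarrow> Pp (-1) 0 0 1 lam"
      by (simp add: charL pp_def qq_def rr_def ss_def C0e)
    finally show ?thesis using Pp_mC0 by simp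
  qed
  have rob: "qq M = rr M \<or> ((rr M > 0 \<longrightarrow> pp M \<noteq> 1) \<and> (qq M > 0 \<longrightarrow> ss M \<noteq> 1) \<and>
      (rr M < 0 \<longrightarrow> pp M \<noteq> -1) \<and> (qq M < 0 \<longrightarrow> ss M \<noteq> -1))"
  proof (cases "W = UNIV")
    case False
    then have "W = sym_mats" using W by blast
    then have "transpose M = M" using maps[OF C0W] by (simp add: M_def sym_mats_def)
    then have "(transpose M)$1$2 = M$1$2" by simp
    then have "M$1$2 = M$2$1" by (simp add: transpose_def)
    then show ?thesis by (simp add: qq_def rr_def)
  next
    case True
    have add': "\<phi> (A + B) = \<phi> A + \<phi> B" for A B using add True by simp
    have scale': "\<phi> (c *\<^sub>R A) = c *\<^sub>R \<phi> A" for c A using scale True by simp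
    have spec': "L_spectrum (\<phi> A) = L_spectrum A" for A using spec True by simp
    define Y1 :: mat2 where "Y1 = (\<chi> i j. if i = 1 then 1 else -1)"
    define Y2 :: mat2 where "Y2 = (\<chi> i j. if j = 1 then 1 else -1)"
    have F1: "L_spectrum (C0 + t *\<^sub>R Y1) \<subseteq> {-1}" if "t > 0" for t
    proof
      fix lam assume "lam \<in> L_spectrum (C0 + t *\<^sub>R Y1)"
      then have "Pp 1 0 (-2 * t) (-1) lam"
        by (simp add: charL pp_def qq_def rr_def ss_def C0e Y1_def field_simps)
      then consider "lam = 1" "-2 * t \<ge> 0" | "lam = -1"
        | u v where "u > 0" "v > 0" "(1 - lam) * u + 0 * v = 0" "(-2 * t) * u + (-1 - lam) * v = 0"
        unfolding Pp_def by blast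
      then show "lam \<in> {-1}"
      proof cases
        case 1 then show ?thesis using that by simp
      next
        case 2 then show ?thesis by simp
      next
        case 3
        then have "lam = 1" by simp
        moreover have "t * u > 0" using that 3 by simp
        ultimately show ?thesis using 3 by simp
      qed
    qed
    have F2: "L_spectrum (- C0 + t *\<^sub>R Y2) \<subseteq> {-1}" if "t > 0" for t
    proof
      fix lam assume "lam \<in> L_spectrum (- C0 + t *\<^sub>R Y2)"
      then have "Pp (-1) (-2 * t) 0 1 lam"
        by (simp add: charL pp_def qq_def rr_def ss_def C0e Y2_def field_simps)
      then consider "lam = -1" | "lam = 1" "-2 * t \<ge> 0"
        | u v where "u > 0" "v > 0" "(-1 - lam) * u + (-2 * t) * v = 0" "0 * u + (1 - lam) * v = 0"
        unfolding Pp_def by blast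
      then show "lam \<in> {-1}"
      proof cases
        case 1 then show ?thesis by simp
      next
        case 2 then show ?thesis using that by simp
      next
        case 3
        then have "lam = 1" by simp
        moreover have "t * v > 0" using that 3 by simp
        ultimately show ?thesis using 3 by simp
      qed
    qed
    note R1 = robust[OF add' scale' spec' F1]
    note R2 = robust[OF add' scale' spec' F2]
    have e: "pp (- M) = - pp M" "qq (- M) = - qq M" "rr (- M) = - rr M" "ss (- M) = - ss M"
      by (simp_all add: pp_def qq_def rr_def ss_def field_simps)
    have "\<not> (pp M = 1 \<and> rr M > 0) \<and> \<not> (ss M = 1 \<and> qq M > 0)"
      using R1 unfolding M_def .
    moreover have "\<not> (pp (- M) = 1 \<and> rr (- M) > 0) \<and> \<not> (ss (- M) = 1 \<and> qq (- M) > 0)"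
      using R2 unfolding negM .
    ultimately show ?thesis unfolding e by linarith
  qed
  have fin: "qq M = 0 \<and> rr M = 0 \<and> ((pp M = 1 \<and> ss M = -1) \<or> (pp M = -1 \<and> ss M = 1))"
    using finalR[OF h1 h2 rob] .
  then consider "qq M = 0" "rr M = 0" "pp M = 1" "ss M = -1"
    | "qq M = 0" "rr M = 0" "pp M = -1" "ss M = 1" by blast
  then have "M = C0 \<or> M = - C0"
  proof cases
    case 1
    have e1: "M$1$1 = 0" using 1 unfolding pp_def qq_def rr_def ss_def by (simp add: field_simps; smt (verit))
    have e2: "M$1$2 = 1" using 1 unfolding pp_def qq_def rr_def ss_def by (simp add: field_simps; smt (verit))
    have e3: "M$2$1 = 1" using 1 unfolding pp_def qq_def rr_def ss_def by (simp add: field_simps; smt (verit))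
    have e4: "M$2$2 = 0" using 1 unfolding pp_def qq_def rr_def ss_def by (simp add: field_simps; smt (verit))
    have "M = C0" using e1 e2 e3 e4 by (simp add: vec_eq_iff forall_2 C0e)
    then show ?thesis ..
  next
    case 2
    have e1: "M$1$1 = 0" using 2 unfolding pp_def qq_def rr_def ss_def by (simp add: field_simps; smt (verit))
    have e2: "M$1$2 = -1" using 2 unfolding pp_def qq_def rr_def ss_def by (simp add: field_simps; smt (verit))
    have e3: "M$2$1 = -1" using 2 unfolding pp_def qq_def rr_def ss_def by (simp add: field_simps; smt (verit))
    have e4: "M$2$2 = 0" using 2 unfolding pp_def qq_def rr_def ss_def by (simp add: field_simps; smt (verit))
    have "M = - C0" using e1 e2 e3 e4 by (simp add: vec_eq_iff forall_2 C0e)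
    then show ?thesis ..
  qed
  then show ?thesis unfolding M_def C0_def .
qed

end
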